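(* Let $a_n$ be the number of equivalence classes of period configurations of Parallel Diffusion on the unlabelled complete graph $K_n$, and let $\alpha\approx 3.2056$ be the unique real root of $x^3-5x^2+7x-4$. Then $a_n\sim c\,\alpha^n$ as $n\to\infty$ for a constant $c\approx 0.1809$; that is, $a_n/\alpha^n$ converges to a positive constant approximately equal to $0.1809$.
   Context: Parallel Diffusion on a graph $G$: a configuration assigns an integer stack size $|v|$ to each vertex. One firing step replaces every stack size simultaneously by $|v| + \#\{u\in N(v): |u|>|v|\} - \#\{u\in N(v): |u|<|v|\}$. A period configuration is a configuration $D$ such that repeated firing starting from $D$ returns to $D$ after some positive number of steps. On the complete graph $K_n$ with unlabelled vertices, a configuration is a multiset of $n$ integers. Two configurations are equivalent if one is obtained from the other by adding the same integer to every stack size. *)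

theory Defs
  imports Complex_Main "HOL-Library.Multiset"
begin

text \<open>A configuration on the unlabelled complete graph K_n is a multiset of n integers.
  In K_n every vertex is adjacent to all others; a vertex with the same stack size
  contributes neither to the larger nor to the smaller count, so the new stack size of
  a vertex of size v is v + #(elements > v) - #(elements < v).\<close>

definition pd_fire :: "int multiset \<Rightarrow> int multiset" where
  "pd_fire M = image_mset
     (\<lambda>v. v + int (size (filter_mset (\<lambda>u. u > v) M)) - int (size (filter_mset (\<lambda>u. u < v) M))) M"

definition period_config :: "int multiset \<Rightarrow> bool" where
  "period_config M \<longleftrightarrow> (\<exists>k::nat. k > 0 \<and> (pd_fire ^^ k) M = M)"

definition config_equiv :: "nat \<Rightarrow> (int multiset \<times> int multiset) set" where
  "config_equiv n = {(M, M'). size M = n \<and> size M' = n \<and> (\<exists>c::int. M' = image_mset (\<lambda>x. x + c) M)}"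

definition period_classes :: "nat \<Rightarrow> int multiset set set" where
  "period_classes n = {M. size M = n \<and> period_config M} // config_equiv n"

definition a_seq :: "nat \<Rightarrow> nat" where
  "a_seq n = card (period_classes n)"

end

theory Submission
  imports Defs
begin

definition cf :: "int multiset \<Rightarrow> int \<Rightarrow> int" where
  "cf M v = (\<Sum>u\<in>#M. sgn (u - v))"

lemma cf_add: "cf (add_mset u M) v = sgn (u - v) + cf M v"
  by (simp add: cf_def)

lemma cf_count: "int (size (filter_mset (\<lambda>u. u > v) M)) - int (size (filter_mset (\<lambda>u. u < v) M)) = cf M v"
  by (induction M) (auto simp: cf_def sgn_if)

lemma fire_eq: "pd_fire M = image_mset (\<lambda>v. v + cf M v) M"
  unfolding pd_fire_def
  by (rule image_mset_cong) (metis cf_count add_diff_eq)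

definition good :: "int multiset \<Rightarrow> bool" where
  "good M \<longleftrightarrow> (\<forall>x\<in>#M. \<forall>y\<in>#M. x < y \<longrightarrow> (\<forall>z\<in>#M. \<not> (x < z \<and> z < y)) \<longrightarrow>
      y - x < int (count M x + count M y))"

lemma cf_adj:
  assumes "x < y" "\<forall>z\<in>#M. \<not> (x < z \<and> z < y)"
  shows "cf M x - cf M y = int (count M x + count M y)"
  using assms
proof (induction M)
  case empty
  then show ?case by (simp add: cf_def)
next
  case (add u M)
  then have IH: "cf M x - cf M y = int (count M x + count M y)" by auto
  have "\<not> (x < u \<and> u < y)" using add.prems by auto
  then show ?case using IH add.prems(1) by (auto simp: cf_add sgn_if)
qed

lemma cf_mono: "x \<le> y \<Longrightarrow> cf M y \<le> cf M x"
  unfolding cf_def by (rule sum_mset_mono) (auto simp: sgn_if)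

lemma good_anti:
  assumes g: "good M"
  shows "x \<in># M \<Longrightarrow> y \<in># M \<Longrightarrow> x < y \<Longrightarrow> y - x < cf M x - cf M y"
proof (induction "nat (y - x)" arbitrary: x y rule: less_induct)
  case less
  show ?case
  proof (cases "\<exists>z\<in>#M. x < z \<and> z < y")
    case True
    then obtain z where z: "z \<in># M" "x < z" "z < y" by auto
    have "z - x < cf M x - cf M z" using less.hyps[of z x] z less.prems by auto
    moreover have "y - z < cf M z - cf M y" using less.hyps[of y z] z less.prems by auto
    ultimately show ?thesis by linarith
  next
    case False
    then have "cf M x - cf M y = int (count M x + count M y)"
      using cf_adj[of x y M] less.prems by auto
    moreover have "y - x < int (count M x + count M y)"
      using g less.prems False unfolding good_def by blast
    ultimately show ?thesis by linarith
  qed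
qed

lemma sum_mset_neg: "(\<Sum>u\<in>#M. - f u) = - (\<Sum>u\<in>#M. (f u :: int))"
  by (induction M) auto

lemma good_fire2:
  assumes "good M"
  shows "pd_fire (pd_fire M) = M"
proof -
  define g where "g = (\<lambda>v. v + cf M v)"
  have anti: "x \<in># M \<Longrightarrow> y \<in># M \<Longrightarrow> x < y \<Longrightarrow> g y < g x" for x y
    using good_anti[OF assms, of x y] unfolding g_def by linarith
  have sg: "sgn (g u - g x) = sgn (x - u)" if "x \<in># M" "u \<in># M" for x u
    using anti[of x u] anti[of u x] that
    by (cases "x < u"; cases "u < x") (auto simp: sgn_if)
  have cfg: "cf (image_mset g M) (g x) = - cf M x" if "x \<in># M" for x
  proof -
    have "cf (image_mset g M) (g x) = (\<Sum>u\<in>#M. sgn (g u - g x))"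
      by (simp add: cf_def multiset.map_comp o_def)
    also have "\<dots> = (\<Sum>u\<in>#M. - sgn (u - x))"
      by (rule arg_cong[where f=sum_mset], rule image_mset_cong) (use sg that in \<open>auto simp: sgn_if\<close>)
    also have "\<dots> = - cf M x" by (simp add: sum_mset_neg cf_def)
    finally show ?thesis .
  qed
  have "pd_fire (pd_fire M) = image_mset (\<lambda>v. v + cf (image_mset g M) v) (image_mset g M)"
    by (simp add: fire_eq g_def)
  also have "\<dots> = image_mset (\<lambda>x. g x + cf (image_mset g M) (g x)) M"
    by (simp add: multiset.map_comp o_def)
  also have "\<dots> = image_mset id M"
  proof (rule image_mset_cong)
    fix x assume x: "x \<in># M"
    show "g x + cf (image_mset g M) (g x) = id x" using cfg[OF x] unfolding g_def by simp
  qed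
  finally show ?thesis by simp
qed

lemma good_period: "good M \<Longrightarrow> period_config M"
  unfolding period_config_def
  by (rule exI[of _ 2]) (simp add: good_fire2 numeral_2_eq_2)

definition Qf :: "int multiset \<Rightarrow> int" where "Qf M = (\<Sum>x\<in>#M. x^2)"
definition Sf :: "int multiset \<Rightarrow> int" where "Sf M = (\<Sum>x\<in>#M. \<Sum>y\<in>#M. \<bar>x - y\<bar>)"
definition Wf :: "int multiset \<Rightarrow> int" where "Wf M = (\<Sum>x\<in>#M. (cf M x)^2)"

lemma dsum_add: "(\<Sum>x\<in>#M. \<Sum>y\<in>#N. F x y + G x y) = (\<Sum>x\<in>#M. \<Sum>y\<in>#N. F x y) + (\<Sum>x\<in>#M. \<Sum>y\<in>#N. (G x y :: int))"
  by (simp add: sum_mset.distrib)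

lemma dsum_swap: "(\<Sum>x\<in>#M. \<Sum>y\<in>#N. F x y) = (\<Sum>y\<in>#N. \<Sum>x\<in>#M. (F x y :: int))"
  by (rule sum_mset.swap)

lemma sum_cong_m: "(\<And>x. x \<in># M \<Longrightarrow> f x = g x) \<Longrightarrow> (\<Sum>x\<in>#M. f x) = (\<Sum>x\<in>#M. (g x :: int))"
  by (metis image_mset_cong)

lemma E1: "Qf (pd_fire M) = Qf M - Sf M + Wf M"
proof -
  define K where "K = (\<Sum>x\<in>#M. \<Sum>y\<in>#M. x * sgn (y - x))"
  have K1: "(\<Sum>x\<in>#M. x * cf M x) = K"
    unfolding K_def cf_def by (simp add: sum_mset_distrib_left)
  have K2: "K = (\<Sum>x\<in>#M. \<Sum>y\<in>#M. y * sgn (x - y))"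
    unfolding K_def by (rule dsum_swap)
  have "K + K = (\<Sum>x\<in>#M. \<Sum>y\<in>#M. x * sgn (y - x) + y * sgn (x - y))"
    by (subst dsum_add) (simp add: K_def K2[unfolded K_def])
  also have "\<dots> = (\<Sum>x\<in>#M. \<Sum>y\<in>#M. - \<bar>x - y\<bar>)"
    by (intro sum_cong_m) (auto simp: sgn_if)
  also have "\<dots> = - Sf M" by (simp add: Sf_def sum_mset_neg)
  finally have KS: "2 * K = - Sf M" by simp
  have "Qf (pd_fire M) = (\<Sum>x\<in>#M. x^2 + 2 * (x * cf M x) + (cf M x)^2)"
    by (simp add: Qf_def fire_eq multiset.map_comp o_def power2_eq_square algebra_simps)
  also have "\<dots> = Qf M + 2 * K + Wf M"
    by (simp add: sum_mset.distrib Qf_def Wf_def K1 sum_mset_distrib_left[symmetric])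
  finally show ?thesis using KS by simp
qed

definition tau :: "int multiset \<Rightarrow> int \<Rightarrow> int \<Rightarrow> int" where
  "tau M x y = \<bar>x - y\<bar> + \<bar>(x + cf M x) - (y + cf M y)\<bar> - (cf M x - cf M y) * sgn (y - x)"

lemma tau_nonneg: "tau M x y \<ge> 0"
proof -
  have "\<bar>cf M x - cf M y\<bar> \<le> \<bar>x - y\<bar> + \<bar>(x + cf M x) - (y + cf M y)\<bar>" by linarith
  moreover have "(cf M x - cf M y) * sgn (y - x) \<le> \<bar>cf M x - cf M y\<bar>"
    by (auto simp: sgn_if)
  ultimately show ?thesis unfolding tau_def by linarith
qed

lemma E2: "(\<Sum>x\<in>#M. \<Sum>y\<in>#M. tau M x y) = Sf M + Sf (pd_fire M) - 2 * Wf M"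
proof -
  have S2: "Sf (pd_fire M) = (\<Sum>x\<in>#M. \<Sum>y\<in>#M. \<bar>(x + cf M x) - (y + cf M y)\<bar>)"
    by (simp add: Sf_def fire_eq multiset.map_comp o_def)
  have A: "(\<Sum>x\<in>#M. \<Sum>y\<in>#M. cf M x * sgn (y - x)) = Wf M"
    by (simp add: Wf_def cf_def sum_mset_distrib_left power2_eq_square)
  have "(\<Sum>x\<in>#M. \<Sum>y\<in>#M. cf M y * sgn (y - x)) = (\<Sum>y\<in>#M. \<Sum>x\<in>#M. cf M y * sgn (y - x))"
    by (rule dsum_swap)
  also have "\<dots> = (\<Sum>y\<in>#M. \<Sum>x\<in>#M. - (cf M y * sgn (x - y)))"
    by (intro sum_cong_m) (auto simp: sgn_if)
  also have "\<dots> = - Wf M"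
    by (simp add: Wf_def cf_def sum_mset_neg sum_mset_distrib_left power2_eq_square)
  finally have B: "(\<Sum>x\<in>#M. \<Sum>y\<in>#M. cf M y * sgn (y - x)) = - Wf M" .
  have "(\<Sum>x\<in>#M. \<Sum>y\<in>#M. tau M x y) = (\<Sum>x\<in>#M. \<Sum>y\<in>#M. \<bar>x - y\<bar> + \<bar>(x + cf M x) - (y + cf M y)\<bar> + (- (cf M x * sgn (y - x)) + cf M y * sgn (y - x)))"
    by (intro sum_cong_m) (simp add: tau_def algebra_simps)
  also have "\<dots> = Sf M + Sf (pd_fire M) - 2 * Wf M"
    unfolding dsum_add S2 Sf_def[of M] by (simp add: sum_mset_neg A B)
  finally show ?thesis .
qed

lemma sum_mset_nonneg_int: "(\<And>x. x \<in># M \<Longrightarrow> 0 \<le> f x) \<Longrightarrow> 0 \<le> (\<Sum>x\<in>#M. (f x :: int))"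
proof -
  assume a: "\<And>x. x \<in># M \<Longrightarrow> 0 \<le> f x"
  have "(\<Sum>x\<in>#M. (0::int)) \<le> (\<Sum>x\<in>#M. f x)" by (rule sum_mset_mono) (use a in auto)
  then show ?thesis by simp
qed

lemma sum_nonneg_zero:
  "(\<And>x. x \<in># M \<Longrightarrow> 0 \<le> f x) \<Longrightarrow> (\<Sum>x\<in>#M. (f x :: int)) = 0 \<Longrightarrow> x \<in># M \<Longrightarrow> f x = 0"
proof (induction M)
  case empty then show ?case by simp
next
  case (add u M)
  have "(\<Sum>x\<in>#M. (0::int)) \<le> (\<Sum>x\<in>#M. f x)" by (rule sum_mset_mono) (use add.prems in auto)
  then have "0 \<le> (\<Sum>x\<in>#M. f x)" by simp
  moreover have "0 \<le> f u" using add.prems by auto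
  ultimately have "f u = 0" "(\<Sum>x\<in>#M. f x) = 0" using add.prems(2) by auto
  then show ?case using add by auto
qed

lemma card_fire: "card (set_mset (pd_fire M)) \<le> card (set_mset M)"
  by (simp add: fire_eq card_image_le)

lemma period_good:
  assumes "period_config M"
  shows "good M"
proof -
  obtain k where k: "k > 0" "(pd_fire ^^ k) M = M"
    using assms unfolding period_config_def by auto
  define Ms where "Ms t = (pd_fire ^^ t) M" for t
  have MsS: "Ms (Suc t) = pd_fire (Ms t)" for t by (simp add: Ms_def)
  define phi where "phi t = Sf (Ms t) - 2 * Qf (Ms t)" for t
  define D where "D t = Sf (Ms t) + Sf (Ms (Suc t)) - 2 * Wf (Ms t)" for t
  have Dphi: "D t = phi (Suc t) - phi t" for t
    using E1[of "Ms t"] unfolding D_def phi_def MsS by simp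
  have Dnn: "D t \<ge> 0" for t
  proof -
    have "(\<Sum>x\<in>#Ms t. \<Sum>y\<in>#Ms t. tau (Ms t) x y) \<ge> 0"
      by (intro sum_mset_nonneg_int) (auto intro: sum_mset_nonneg_int tau_nonneg)
    then show ?thesis unfolding D_def MsS E2[symmetric] .
  qed
  have "(\<Sum>t<k. D t) = phi k - phi 0"
    unfolding Dphi by (rule sum_lessThan_telescope)
  also have "\<dots> = 0" using k by (simp add: phi_def Ms_def)
  finally have "D 0 = 0"
    using sum_nonneg_eq_0_iff[of "{..<k}" D] Dnn k by auto
  then have tsum: "(\<Sum>x\<in>#M. \<Sum>y\<in>#M. tau M x y) = 0"
    using E2[of M] by (simp add: D_def Ms_def)
  have tau0: "tau M x y = 0" if "x \<in># M" "y \<in># M" for x y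
  proof -
    have "(\<Sum>y\<in>#M. tau M x y) = 0"
      by (rule sum_nonneg_zero[OF _ tsum that(1)])
         (auto intro: sum_mset_nonneg_int tau_nonneg)
    then show ?thesis
      using sum_nonneg_zero[of M "tau M x" y] that(2) tau_nonneg by blast
  qed
  define kap where "kap t = card (set_mset (Ms t))" for t
  have "kap (Suc t) \<le> kap t" for t unfolding kap_def MsS by (rule card_fire)
  then have dec: "i \<le> j \<Longrightarrow> kap j \<le> kap i" for i j
    by (rule lift_Suc_antimono_le)
  have "kap k = kap 0" using k by (simp add: kap_def Ms_def)
  then have "kap 1 = kap 0" using dec[of 1 k] dec[of 0 1] k by linarith
  then have ceq: "card ((\<lambda>v. v + cf M v) ` set_mset M) = card (set_mset M)"
    by (simp add: kap_def Ms_def fire_eq)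
  have inj: "inj_on (\<lambda>v. v + cf M v) (set_mset M)"
    using ceq by (simp add: inj_on_iff_eq_card)
  show ?thesis unfolding good_def
  proof (intro ballI impI)
    fix x y assume xy: "x \<in># M" "y \<in># M" "x < y" and adj: "\<forall>z\<in>#M. \<not> (x < z \<and> z < y)"
    have c: "cf M x - cf M y = int (count M x + count M y)" by (rule cf_adj) (use xy adj in auto)
    have t: "tau M x y = 0" by (rule tau0) (use xy in auto)
    have "x + cf M x \<noteq> y + cf M y" using inj xy unfolding inj_on_def by auto
    then show "y - x < int (count M x + count M y)"
      using t c xy(3) unfolding tau_def by (auto simp: sgn_if)
  qed
qed

lemma period_iff_good: "period_config M \<longleftrightarrow> good M"
  using period_good good_period by blast


definition shift :: "int \<Rightarrow> int multiset \<Rightarrow> int multiset" where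
  "shift c M = image_mset (\<lambda>x. x + c) M"

lemma shift_shift: "shift c (shift d M) = shift (c + d) M"
  by (simp add: shift_def multiset.map_comp o_def algebra_simps)

lemma shift_0[simp]: "shift 0 M = M" by (simp add: shift_def)

lemma size_shift[simp]: "size (shift c M) = size M" by (simp add: shift_def)

lemma cf_shift: "cf (shift c M) (v + c) = cf M v"
  by (simp add: cf_def shift_def multiset.map_comp o_def)

lemma fire_shift: "pd_fire (shift c M) = shift c (pd_fire M)"
  by (simp add: fire_eq shift_def multiset.map_comp o_def cf_shift[unfolded shift_def] algebra_simps)

lemma fire_pow_shift: "(pd_fire ^^ k) (shift c M) = shift c ((pd_fire ^^ k) M)"
  by (induction k) (simp_all add: fire_shift)

lemma shift_inj: "shift c M = shift c N \<Longrightarrow> M = N"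
proof -
  assume "shift c M = shift c N"
  then have "shift (-c) (shift c M) = shift (-c) (shift c N)" by simp
  then show ?thesis by (simp add: shift_shift)
qed

lemma period_shift: "period_config (shift c M) \<longleftrightarrow> period_config M"
  unfolding period_config_def fire_pow_shift by (auto dest: shift_inj)

lemma Min_shift:
  assumes "M \<noteq> {#}"
  shows "Min (set_mset (shift c M)) = Min (set_mset M) + c"
proof -
  have "mono (\<lambda>x::int. x + c)" by (simp add: mono_def)
  then show ?thesis using assms
    by (simp add: shift_def mono_Min_commute[symmetric])
qed

definition Nset :: "nat \<Rightarrow> int multiset set" where
  "Nset n = {M. size M = n \<and> period_config M \<and> Min (set_mset M) = 0}"

lemma class_eq:
  assumes "size x = n"
  shows "config_equiv n `` {x} = range (\<lambda>c. shift c x)"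
  using assms unfolding config_equiv_def shift_def by auto

lemma a_seq_Nset:
  assumes "n \<ge> 1"
  shows "a_seq n = card (Nset n)"
proof -
  define cls where "cls x = range (\<lambda>c. shift c x)" for x
  have cls_shift: "cls (shift d x) = cls x" for d x
    unfolding cls_def
  proof (auto simp: shift_shift)
    fix c show "shift c x \<in> range (\<lambda>c. shift (c + d) x)"
      by (rule image_eqI[of _ _ "c - d"]) auto
  qed
  have ne: "x \<noteq> {#}" if "size x = n" for x using that assms by auto
  have "period_classes n = cls ` Nset n"
  proof
    show "period_classes n \<subseteq> cls ` Nset n"
    proof
      fix X assume "X \<in> period_classes n"
      then obtain x where x: "size x = n" "period_config x" and X: "X = config_equiv n `` {x}"
        unfolding period_classes_def quotient_def by auto
      define y where "y = shift (- Min (set_mset x)) x"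
      have "y \<in> Nset n" unfolding Nset_def y_def
        using x period_shift Min_shift[OF ne[OF x(1)]] by simp
      moreover have "cls y = cls x" unfolding y_def by (rule cls_shift)
      moreover have "X = cls x" unfolding X class_eq[OF x(1)] cls_def ..
      ultimately show "X \<in> cls ` Nset n" by (metis image_eqI)
    qed
  next
    show "cls ` Nset n \<subseteq> period_classes n"
    proof
      fix X assume "X \<in> cls ` Nset n"
      then obtain y where y: "y \<in> Nset n" "X = cls y" by auto
      then have "X = config_equiv n `` {y}" using class_eq[of y n] by (simp add: Nset_def cls_def)
      then show "X \<in> period_classes n" using y unfolding period_classes_def Nset_def
        by (auto intro: quotientI)
    qed
  qed
  moreover have "inj_on cls (Nset n)"
  proof (rule inj_onI)
    fix x y assume xy: "x \<in> Nset n" "y \<in> Nset n" "cls x = cls y"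
    have "y \<in> cls y" unfolding cls_def by (rule image_eqI[of _ _ 0]) auto
    then obtain c where c: "y = shift c x" using xy(3) unfolding cls_def by auto
    have "Min (set_mset y) = Min (set_mset x) + c"
      using c Min_shift[of x c] ne[of x] xy(1) by (simp add: Nset_def)
    then have "c = 0" using xy by (simp add: Nset_def)
    then show "x = y" using c by simp
  qed
  ultimately show ?thesis unfolding a_seq_def by (simp add: card_image)
qed


definition Gset :: "nat \<Rightarrow> nat \<Rightarrow> int multiset set" where
  "Gset n m = {M. size M = n \<and> good M \<and> Min (set_mset M) = 0 \<and> count M (Max (set_mset M)) = m}"

lemma goodD: "good M \<Longrightarrow> x \<in># M \<Longrightarrow> y \<in># M \<Longrightarrow> x < y \<Longrightarrow> (\<forall>z\<in>#M. \<not> (x < z \<and> z < y))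
   \<Longrightarrow> y - x < int (count M x + count M y)"
  unfolding good_def by blast

lemma top_basic:
  assumes ne: "M' \<noteq> {#}" and t: "Max (set_mset M') < t" and m: "m \<ge> 1"
  defines "M \<equiv> M' + replicate_mset m t"
  shows "set_mset M = insert t (set_mset M')" "Max (set_mset M) = t"
    "Min (set_mset M) = Min (set_mset M')" "count M t = m" "size M = size M' + m"
    "t \<notin># M'"
proof -
  have fin: "finite (set_mset M')" "set_mset M' \<noteq> {}" using ne by auto
  have le: "x \<le> Max (set_mset M')" if "x \<in># M'" for x using fin that by auto
  show tn: "t \<notin># M'" using le[of t] t by (meson not_le)
  show s: "set_mset M = insert t (set_mset M')" using m by (auto simp: M_def)
  show "Max (set_mset M) = t" unfolding s using fin t by (simp add: Max_insert)
  have "Min (set_mset M') \<le> Max (set_mset M')" using fin by (simp add: Min_le_iff)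
  then show "Min (set_mset M) = Min (set_mset M')" unfolding s using fin t by (simp add: Min_insert)
  show "count M t = m" using tn by (simp add: M_def not_in_iff)
  show "size M = size M' + m" by (simp add: M_def)
qed

lemma top_good:
  assumes ne: "M' \<noteq> {#}" and t: "Max (set_mset M') < t" and m: "m \<ge> 1"
  shows "good (M' + replicate_mset m t) \<longleftrightarrow>
     good M' \<and> t - Max (set_mset M') < int (m + count M' (Max (set_mset M')))"
proof -
  define M where "M = M' + replicate_mset m t"
  have fin: "finite (set_mset M')" "set_mset M' \<noteq> {}" using ne by auto
  have le: "x \<le> Max (set_mset M')" if "x \<in># M'" for x using fin that by auto
  have tn: "t \<notin># M'" using le[of t] t by (meson not_le)
  have mx: "Max (set_mset M') \<in># M'" using fin by auto
  have cnt: "count M x = count M' x + (if x = t then m else 0)" for x by (simp add: M_def)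
  have mem: "x \<in># M \<longleftrightarrow> x \<in># M' \<or> x = t" for x using m by (auto simp: M_def)
  have "good M \<longleftrightarrow> good M' \<and> t - Max (set_mset M') < int (m + count M' (Max (set_mset M')))"
  proof
    assume g: "good M"
    have "good M'" unfolding good_def
    proof (intro ballI impI)
      fix x y assume xy: "x \<in># M'" "y \<in># M'" "x < y" and adj: "\<forall>z\<in>#M'. \<not> (x < z \<and> z < y)"
      have "\<forall>z\<in>#M. \<not> (x < z \<and> z < y)"
      proof
        fix z assume "z \<in># M"
        then have "z \<in># M' \<or> z = t" using mem by simp
        then show "\<not> (x < z \<and> z < y)"
        proof
          assume "z \<in># M'" then show ?thesis using adj by simp
        next
          assume "z = t" then show ?thesis using le[OF xy(2)] t by simp
        qed
      qed
      moreover have "x \<noteq> t" "y \<noteq> t" using xy tn by auto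
      moreover have "x \<in># M" "y \<in># M" using xy mem by auto
      ultimately have "y - x < int (count M x + count M y)" using goodD[OF g] xy(3) by blast
      then show "y - x < int (count M' x + count M' y)" using \<open>x \<noteq> t\<close> \<open>y \<noteq> t\<close> by (simp add: cnt)
    qed
    moreover have "t - Max (set_mset M') < int (m + count M' (Max (set_mset M')))"
    proof -
      have "\<forall>z\<in>#M. \<not> (Max (set_mset M') < z \<and> z < t)"
      proof
        fix z assume "z \<in># M"
        then have "z \<in># M' \<or> z = t" using mem by simp
        then show "\<not> (Max (set_mset M') < z \<and> z < t)" by (auto dest: le)
      qed
      moreover have "Max (set_mset M') \<noteq> t" using t by auto
      moreover have "Max (set_mset M') \<in># M" "t \<in># M" using mem mx by auto
      ultimately have "t - Max (set_mset M') < int (count M (Max (set_mset M')) + count M t)"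
        using goodD[OF g] t by blast
      then show ?thesis using tn \<open>Max (set_mset M') \<noteq> t\<close> by (simp add: cnt not_in_iff)
    qed
    ultimately show "good M' \<and> t - Max (set_mset M') < int (m + count M' (Max (set_mset M')))" ..
  next
    assume h: "good M' \<and> t - Max (set_mset M') < int (m + count M' (Max (set_mset M')))"
    show "good M" unfolding good_def
    proof (intro ballI impI)
      fix x y assume xy: "x \<in># M" "y \<in># M" "x < y" and adj: "\<forall>z\<in>#M. \<not> (x < z \<and> z < y)"
      show "y - x < int (count M x + count M y)"
      proof (cases "y = t")
        case True
        then have x: "x \<in># M'" using xy mem by auto
        have "x = Max (set_mset M')"
        proof (rule ccontr)
          assume "x \<noteq> Max (set_mset M')"
          then have "x < Max (set_mset M')" using le[OF x] by auto
          then show False using adj mem mx t True by auto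
        qed
        then show ?thesis using h True t cnt[of x] cnt[of y] by auto
      next
        case False
        then have y: "y \<in># M'" using xy mem by auto
        have x: "x \<in># M'" using xy mem le[OF y] t by auto
        have "x \<noteq> t" using x tn by auto
        moreover have "\<forall>z\<in>#M'. \<not> (x < z \<and> z < y)" using adj mem by auto
        ultimately have "y - x < int (count M' x + count M' y)" using goodD[of M'] h x y xy(3) by blast
        then show ?thesis using \<open>x \<noteq> t\<close> False by (simp add: cnt)
      qed
    qed
  qed
  then show ?thesis by (simp add: M_def)
qed

definition Nn :: "nat \<Rightarrow> int multiset set" where
  "Nn n = {M. size M = n \<and> good M \<and> Min (set_mset M) = 0}"

lemma count_max_range:
  assumes "M \<noteq> {#}"
  shows "count M (Max (set_mset M)) \<in> {1..size M}"
proof -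
  have "Max (set_mset M) \<in># M" using assms by auto
  then have "count M (Max (set_mset M)) \<ge> 1" by (simp add: Suc_le_eq)
  moreover have "count M (Max (set_mset M)) \<le> size M" by (rule count_le_size)
  ultimately show ?thesis by auto
qed

lemma Nn_Union: "n \<ge> 1 \<Longrightarrow> Nn n = (\<Union>m\<in>{1..n}. Gset n m)"
proof -
  assume n: "n \<ge> 1"
  show "Nn n = (\<Union>m\<in>{1..n}. Gset n m)"
  proof
    show "Nn n \<subseteq> (\<Union>m\<in>{1..n}. Gset n m)"
    proof
      fix M assume M: "M \<in> Nn n"
      then have "M \<noteq> {#}" "size M = n" using n by (auto simp: Nn_def)
      then have "count M (Max (set_mset M)) \<in> {1..n}" using count_max_range by metis
      moreover have "M \<in> Gset n (count M (Max (set_mset M)))" using M by (simp add: Nn_def Gset_def)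
      ultimately show "M \<in> (\<Union>m\<in>{1..n}. Gset n m)" by blast
    qed
    show "(\<Union>m\<in>{1..n}. Gset n m) \<subseteq> Nn n" by (auto simp: Nn_def Gset_def)
  qed
qed

lemma Gset_disj: "m \<noteq> m' \<Longrightarrow> Gset n m \<inter> Gset n m' = {}"
  unfolding Gset_def by auto

lemma all_eq_repl:
  assumes "count M x = size M"
  shows "M = replicate_mset (size M) x"
proof -
  have "size (filter_mset (\<lambda>y. y = x) M) + size (filter_mset (\<lambda>y. \<not> y = x) M) = size M"
    by (metis multiset_partition size_union)
  then have "filter_mset (\<lambda>y. \<not> y = x) M = {#}"
    using assms by (simp add: filter_eq_replicate_mset)
  then show ?thesis
  proof -
    have "M = filter_mset (\<lambda>y. y = x) M + filter_mset (\<lambda>y. \<not> y = x) M" by (rule multiset_partition)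
    also have "\<dots> = replicate_mset (size M) x" using \<open>filter_mset (\<lambda>y. \<not> y = x) M = {#}\<close> assms
      by (simp add: filter_eq_replicate_mset)
    finally show ?thesis .
  qed
qed

lemma Gset_nn:
  assumes "n \<ge> 1"
  shows "Gset n n = {replicate_mset n 0}"
proof
  show "Gset n n \<subseteq> {replicate_mset n 0}"
  proof
    fix M assume M: "M \<in> Gset n n"
    then have "count M (Max (set_mset M)) = size M" "size M = n" by (auto simp: Gset_def)
    then have r: "M = replicate_mset n (Max (set_mset M))" using all_eq_repl by metis
    then have "set_mset M = {Max (set_mset M)}" using assms by (metis set_mset_replicate_mset_subset not_one_le_zero)
    then have "Min (set_mset M) = Max (set_mset M)" by (metis Min_singleton)
    then have "Max (set_mset M) = 0" using M by (simp add: Gset_def)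
    then show "M \<in> {replicate_mset n 0}" using r by simp
  qed
next
  have "good (replicate_mset n 0)" unfolding good_def by auto
  then show "{replicate_mset n 0} \<subseteq> Gset n n" using assms by (auto simp: Gset_def)
qed

lemma Gset_big: "m > n \<Longrightarrow> Gset n m = {}"
proof -
  assume mn: "m > n"
  have "M \<notin> Gset n m" for M
  proof
    assume "M \<in> Gset n m"
    then have "count M (Max (set_mset M)) = m" "size M = n" by (auto simp: Gset_def)
    then show False using count_le_size[of M "Max (set_mset M)"] mn by simp
  qed
  then show ?thesis by auto
qed

lemma Gset_rec:
  assumes m: "1 \<le> m" "m < n" and fin: "\<And>k. finite (Gset (n - m) k)"
  shows "finite (Gset n m) \<and> card (Gset n m) = (\<Sum>k=1..n-m. (m + k - 1) * card (Gset (n - m) k))"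
proof -
  define j where "j = n - m"
  have j1: "j \<ge> 1" using m by (simp add: j_def)
  define Dom where "Dom = Sigma (Nn j) (\<lambda>M'. {1..m + count M' (Max (set_mset M')) - 1})"
  define Phi where "Phi = (\<lambda>(M'::int multiset, d::nat). M' + replicate_mset m (Max (set_mset M') + int d))"
  have neN: "M' \<noteq> {#}" if "M' \<in> Nn j" for M' using that j1 by (auto simp: Nn_def)
  have img: "Phi ` Dom = Gset n m"
  proof
    show "Phi ` Dom \<subseteq> Gset n m"
    proof
      fix M assume "M \<in> Phi ` Dom"
      then obtain M' d where Md: "M' \<in> Nn j" "d \<in> {1..m + count M' (Max (set_mset M')) - 1}" "M = Phi (M', d)"
        unfolding Dom_def by auto
      define t where "t = Max (set_mset M') + int d"
      have ne: "M' \<noteq> {#}" by (rule neN[OF Md(1)])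
      have tgt: "Max (set_mset M') < t" using Md(2) by (simp add: t_def)
      have MM: "M = M' + replicate_mset m t" using Md(3) by (simp add: Phi_def t_def)
      note tb = top_basic[OF ne tgt m(1)]
      have "good M" unfolding MM top_good[OF ne tgt m(1)]
        using Md(1,2) by (auto simp: Nn_def t_def)
      then show "M \<in> Gset n m" using tb Md(1) m unfolding MM by (auto simp: Gset_def Nn_def j_def)
    qed
  next
    show "Gset n m \<subseteq> Phi ` Dom"
    proof
      fix M assume M: "M \<in> Gset n m"
      define t where "t = Max (set_mset M)"
      define M' where "M' = M - replicate_mset m t"
      have ct: "count M t = m" using M by (simp add: Gset_def t_def)
      have sub: "replicate_mset m t \<subseteq># M" using ct count_le_replicate_mset_subset_eq[of m M t] by simp
      have MM: "M = M' + replicate_mset m t" unfolding M'_def using sub by (simp add: subset_mset.diff_add)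
      have szM: "size M = n" using M by (simp add: Gset_def)
      have szM': "size M' = j" using szM unfolding M'_def j_def using sub by (simp add: size_Diff_submset)
      have ne: "M' \<noteq> {#}" using szM' j1 by auto
      have ct': "count M' t = 0" using ct by (simp add: M'_def)
      have neM: "M \<noteq> {#}" using ne MM by auto
      have lt: "x < t" if "x \<in># M'" for x
      proof -
        have "x \<in># M" using that MM by auto
        then have "x \<le> t" unfolding t_def using neM by auto
        moreover have "x \<noteq> t" using that ct' by (metis not_in_iff)
        ultimately show ?thesis by auto
      qed
      have tgt: "Max (set_mset M') < t" using ne lt by auto
      note tb = top_basic[OF ne tgt m(1)]
      have gM: "good M" using M by (simp add: Gset_def)
      then have gM': "good M'" and dlt: "t - Max (set_mset M') < int (m + count M' (Max (set_mset M')))"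
        using top_good[OF ne tgt m(1)] MM by auto
      define d where "d = nat (t - Max (set_mset M'))"
      have "Min (set_mset M') = 0" using tb(3) M MM by (simp add: Gset_def)
      then have inN: "M' \<in> Nn j" using gM' szM' by (simp add: Nn_def)
      have d1: "int d = t - Max (set_mset M')" using tgt by (simp add: d_def)
      have "d \<ge> 1" "d + 1 \<le> m + count M' (Max (set_mset M'))" using d1 dlt tgt by linarith+
      then have "d \<in> {1..m + count M' (Max (set_mset M')) - 1}" by simp
      moreover have "M = Phi (M', d)" using MM tgt by (simp add: Phi_def d_def)
      ultimately show "M \<in> Phi ` Dom" using inN unfolding Dom_def by auto
    qed
  qed
  have inj: "inj_on Phi Dom"
  proof (rule inj_onI)
    fix p q assume p: "p \<in> Dom" and q: "q \<in> Dom" and eq: "Phi p = Phi q"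
    obtain M1 d1 where p': "p = (M1, d1)" by (cases p)
    obtain M2 d2 where q': "q = (M2, d2)" by (cases q)
    have ne1: "M1 \<noteq> {#}" "d1 \<ge> 1" using p p' neN unfolding Dom_def by auto
    have ne2: "M2 \<noteq> {#}" "d2 \<ge> 1" using q q' neN unfolding Dom_def by auto
    have t1: "Max (set_mset M1) < Max (set_mset M1) + int d1" using ne1 by simp
    have t2: "Max (set_mset M2) < Max (set_mset M2) + int d2" using ne2 by simp
    have e: "M1 + replicate_mset m (Max (set_mset M1) + int d1) = M2 + replicate_mset m (Max (set_mset M2) + int d2)"
      using eq p' q' by (simp add: Phi_def)
    have tt: "Max (set_mset M1) + int d1 = Max (set_mset M2) + int d2"
    proof -
      have "Max (set_mset (M1 + replicate_mset m (Max (set_mset M1) + int d1))) = Max (set_mset M1) + int d1"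
        by (rule top_basic(2)[OF ne1(1) t1 m(1)])
      moreover have "Max (set_mset (M2 + replicate_mset m (Max (set_mset M2) + int d2))) = Max (set_mset M2) + int d2"
        by (rule top_basic(2)[OF ne2(1) t2 m(1)])
      ultimately show ?thesis using e by simp
    qed
    then have "M1 = M2" using e by simp
    then show "p = q" using tt p' q' by simp
  qed
  have finN: "finite (Nn j)" unfolding Nn_Union[OF j1] using fin by (simp add: j_def)
  have finD: "finite Dom" unfolding Dom_def using finN by auto
  have "card (Gset n m) = card Dom" using card_image[OF inj] img by simp
  also have "\<dots> = (\<Sum>M'\<in>Nn j. m + count M' (Max (set_mset M')) - 1)"
    unfolding Dom_def using finN by (simp add: card_SigmaI)
  also have "\<dots> = (\<Sum>k=1..j. \<Sum>M'\<in>Gset j k. m + count M' (Max (set_mset M')) - 1)"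
    unfolding Nn_Union[OF j1] using fin Gset_disj by (subst sum.UNION_disjoint) (auto simp: j_def)
  also have "\<dots> = (\<Sum>k=1..j. (m + k - 1) * card (Gset j k))"
    by (intro sum.cong refl) (simp add: Gset_def)
  moreover have "finite (Gset n m)" using img finD by (metis finite_imageI)
  ultimately show ?thesis by (simp add: j_def mult.commute)
qed


definition Aq :: "(nat \<Rightarrow> nat \<Rightarrow> nat) \<Rightarrow> nat \<Rightarrow> int" where
  "Aq g n = (\<Sum>m=1..n. int (g n m))"
definition Bq :: "(nat \<Rightarrow> nat \<Rightarrow> nat) \<Rightarrow> nat \<Rightarrow> int" where
  "Bq g n = (\<Sum>m=1..n. int m * int (g n m))"
definition Pq :: "(nat \<Rightarrow> nat \<Rightarrow> nat) \<Rightarrow> nat \<Rightarrow> int" where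
  "Pq g n = (\<Sum>m=1..n. Aq g (n - m))"
definition Rq :: "(nat \<Rightarrow> nat \<Rightarrow> nat) \<Rightarrow> nat \<Rightarrow> int" where
  "Rq g n = (\<Sum>m=1..n. int (m + 1) * Aq g (n - m))"

lemma sum_split1: "(\<Sum>m=1..Suc n. f m) = f 1 + (\<Sum>m=1..n. f (Suc m) :: int)"
proof -
  have a: "sum f {1..Suc n} = f 1 + sum f {Suc 1..Suc n}" by (rule sum.atLeast_Suc_atMost) simp
  have b: "sum f {Suc 1..Suc n} = sum (\<lambda>i. f (Suc i)) {1..n}" by (rule sum.shift_bounds_cl_Suc_ivl)
  show ?thesis using a b by argo
qed

lemma Pq_Suc: "Pq g (Suc n) = Pq g n + Aq g n"
  unfolding Pq_def sum_split1 by simp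

lemma Rq_Suc: "Rq g (Suc n) = 2 * Aq g n + Pq g n + Rq g n"
  unfolding Rq_def Pq_def sum_split1 by (simp add: sum.distrib[symmetric] algebra_simps)

locale gcount =
  fixes g :: "nat \<Rightarrow> nat \<Rightarrow> nat"
  assumes P1: "n \<ge> 1 \<Longrightarrow> g n n = 1"
  and P3: "1 \<le> m \<Longrightarrow> m < n \<Longrightarrow> g n m = (\<Sum>k=1..n-m. (m + k - 1) * g (n - m) k)"
begin

lemma shift_rel:
  assumes "n \<ge> 1" "1 \<le> m" "m \<le> n"
  shows "int (g (Suc n) (Suc m)) = int (g n m) + Aq g (n - m)"
proof (cases "m = n")
  case True
  then show ?thesis using assms P1 by (simp add: Aq_def)
next
  case False
  then have mn: "m < n" using assms by simp
  have "g (Suc n) (Suc m) = (\<Sum>k=1..n-m. (Suc m + k - 1) * g (n - m) k)"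
    using P3[of "Suc m" "Suc n"] mn by simp
  also have "\<dots> = (\<Sum>k=1..n-m. (m + k - 1) * g (n - m) k + g (n - m) k)"
  proof (intro sum.cong refl)
    fix k assume "k \<in> {1..n-m}"
    define j where "j = m + k - 1"
    have "Suc m + k - 1 = Suc j" using \<open>k \<in> {1..n-m}\<close> by (auto simp: j_def)
    then show "(Suc m + k - 1) * g (n - m) k = (m + k - 1) * g (n - m) k + g (n - m) k"
      unfolding j_def[symmetric] by simp
  qed
  finally have "int (g (Suc n) (Suc m)) = (\<Sum>k=1..n-m. int ((m + k - 1) * g (n - m) k)) + (\<Sum>k=1..n-m. int (g (n - m) k))"
    by (simp add: sum.distrib)
  also have "\<dots> = int (g n m) + Aq g (n - m)"
    using P3[of m n] mn assms by (simp add: Aq_def)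
  finally show ?thesis .
qed

lemma g_Suc_1:
  assumes "n \<ge> 1"
  shows "int (g (Suc n) 1) = Bq g n"
  using P3[of 1 "Suc n"] assms by (simp add: Bq_def)

lemma A_Suc:
  assumes "n \<ge> 1"
  shows "Aq g (Suc n) = Aq g n + Bq g n + Pq g n"
proof -
  have "Aq g (Suc n) = int (g (Suc n) 1) + (\<Sum>m=1..n. int (g (Suc n) (Suc m)))"
    unfolding Aq_def by (rule sum_split1)
  also have "\<dots> = Bq g n + (\<Sum>m=1..n. int (g n m) + Aq g (n - m))"
    using assms by (intro arg_cong2[where f="(+)"] g_Suc_1 sum.cong refl) (auto simp: shift_rel)
  also have "\<dots> = Aq g n + Bq g n + Pq g n"
    by (simp add: sum.distrib Aq_def Pq_def)
  finally show ?thesis .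
qed

lemma B_Suc:
  assumes "n \<ge> 1"
  shows "Bq g (Suc n) = Aq g n + 2 * Bq g n + Rq g n"
proof -
  have "Bq g (Suc n) = int (g (Suc n) 1) + (\<Sum>m=1..n. int (Suc m) * int (g (Suc n) (Suc m)))"
    unfolding Bq_def by (subst sum_split1) simp
  also have "\<dots> = Bq g n + (\<Sum>m=1..n. int m * int (g n m) + int (g n m) + int (m + 1) * Aq g (n - m))"
  proof (intro arg_cong2[where f="(+)"] g_Suc_1[OF assms] sum.cong refl)
    fix m assume "m \<in> {1..n}"
    then show "int (Suc m) * int (g (Suc n) (Suc m)) = int m * int (g n m) + int (g n m) + int (m + 1) * Aq g (n - m)"
      using assms by (simp add: shift_rel algebra_simps)
  qed
  also have "\<dots> = Aq g n + 2 * Bq g n + Rq g n"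
    by (simp add: sum.distrib Aq_def Bq_def Rq_def)
  finally show ?thesis .
qed

lemma A_rec:
  assumes "n \<ge> 1"
  shows "Aq g (Suc (Suc (Suc (Suc n)))) = 5 * Aq g (Suc (Suc (Suc n))) - 7 * Aq g (Suc (Suc n)) + 4 * Aq g (Suc n)"
proof -
  have n1: "Suc n \<ge> 1" "Suc (Suc n) \<ge> 1" "Suc (Suc (Suc n)) \<ge> 1" using assms by auto
  note eqs = A_Suc[OF assms] A_Suc[OF n1(1)] A_Suc[OF n1(2)] A_Suc[OF n1(3)]
    B_Suc[OF assms] B_Suc[OF n1(1)] B_Suc[OF n1(2)]
    Pq_Suc[of g n] Pq_Suc[of g "Suc n"] Pq_Suc[of g "Suc (Suc n)"]
    Rq_Suc[of g n] Rq_Suc[of g "Suc n"]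
  show ?thesis using eqs by linarith
qed

lemma A_rec2:
  assumes "k \<ge> 2"
  shows "Aq g (k + 3) = 5 * Aq g (k + 2) - 7 * Aq g (k + 1) + 4 * Aq g k"
proof -
  obtain n where n: "k = Suc n" "n \<ge> 1" using assms by (cases k) auto
  show ?thesis using A_rec[OF n(2)] unfolding n(1) by (simp add: numeral_eq_Suc)
qed

lemma A_vals: "Aq g 2 = 2" "Aq g 3 = 6" "Aq g 4 = 19"
proof -
  have A0: "Aq g 0 = 0" by (simp add: Aq_def)
  have A1: "Aq g 1 = 1" using P1[of 1] by (simp add: Aq_def)
  have B1: "Bq g 1 = 1" using P1[of 1] by (simp add: Bq_def)
  have P1': "Pq g 1 = 0" using A0 by (simp add: Pq_def)
  have R1: "Rq g 1 = 0" using A0 by (simp add: Rq_def)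
  have s1: "Suc 1 \<ge> 1" "Suc (Suc 1) \<ge> 1" by simp_all
  have A2: "Aq g (Suc 1) = 2" using A_Suc[of 1] A1 B1 P1' by simp
  have B2: "Bq g (Suc 1) = 3" using B_Suc[of 1] A1 B1 R1 by simp
  have P2: "Pq g (Suc 1) = 1" using Pq_Suc[of g 1] A1 P1' by simp
  have R2: "Rq g (Suc 1) = 2" using Rq_Suc[of g 1] A1 P1' R1 by simp
  have A3: "Aq g (Suc (Suc 1)) = 6" using A_Suc[OF s1(1)] A2 B2 P2 by simp
  have B3: "Bq g (Suc (Suc 1)) = 10" using B_Suc[OF s1(1)] A2 B2 R2 by simp
  have P3': "Pq g (Suc (Suc 1)) = 3" using Pq_Suc[of g "Suc 1"] A2 P2 by simp
  have A4: "Aq g (Suc (Suc (Suc 1))) = 19" using A_Suc[OF s1(2)] A3 B3 P3' by simp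
  show "Aq g 2 = 2" using A2 by (simp add: numeral_eq_Suc)
  show "Aq g 3 = 6" using A3 by (simp add: numeral_eq_Suc)
  show "Aq g 4 = 19" using A4 by (simp add: numeral_eq_Suc)
qed

end


lemma alpha_facts:
  fixes \<alpha> :: real
  assumes P: "\<alpha> ^ 3 - 5 * \<alpha> ^ 2 + 7 * \<alpha> - 4 = 0"
  shows "3.2 < \<alpha>" "\<alpha> < 3.21"
proof -
  have e: "(\<alpha> - 1)^2 * (\<alpha> - 3) = 1" using P by (simp add: power2_eq_square power3_eq_cube algebra_simps)
  have g3: "\<alpha> > 3"
  proof (rule ccontr)
    assume "\<not> \<alpha> > 3"
    then have "(\<alpha> - 1)^2 * (\<alpha> - 3) \<le> 0" by (simp add: mult_nonneg_nonpos)
    then show False using e by simp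
  qed
  show "3.2 < \<alpha>"
  proof (rule ccontr)
    assume "\<not> 3.2 < \<alpha>"
    then have a: "\<alpha> \<le> 3.2" by simp
    have "(\<alpha> - 1)^2 \<le> 2.2^2" using a g3 by (intro power_mono) auto
    then have "(\<alpha> - 1)^2 * (\<alpha> - 3) \<le> 2.2^2 * 0.2" using a g3
      by (intro mult_mono) auto
    then show False using e by (simp add: power2_eq_square)
  qed
  show "\<alpha> < 3.21"
  proof (rule ccontr)
    assume "\<not> \<alpha> < 3.21"
    then have a: "\<alpha> \<ge> 3.21" by simp
    have "(\<alpha> - 1)^2 \<ge> 2.21^2" using a by (intro power_mono) auto
    then have "(\<alpha> - 1)^2 * (\<alpha> - 3) \<ge> 2.21^2 * 0.21" using a
      by (intro mult_mono) auto
    then show False using e by (simp add: power2_eq_square)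
  qed
qed

lemma c_bounds:
  fixes \<alpha> :: real
  assumes "3.2 < \<alpha>" "\<alpha> < 3.21"
  defines "c \<equiv> (2 * \<alpha>^2 - 4 * \<alpha> + 3) / (11 * \<alpha>^2 - 23 * \<alpha> + 20)"
  shows "c > 0" "\<bar>c - 0.1809\<bar> < 0.0001"
proof -
  have den: "11 * \<alpha>^2 - 23 * \<alpha> + 20 > 0"
  proof -
    have "\<alpha> * (11 * \<alpha> - 23) > 0" using assms by (intro mult_pos_pos) auto
    then show ?thesis by (simp add: power2_eq_square algebra_simps)
  qed
  have num: "2 * \<alpha>^2 - 4 * \<alpha> + 3 > 0"
  proof -
    have "\<alpha> * (2 * \<alpha> - 4) > 0" using assms by (intro mult_pos_pos) auto
    then show ?thesis by (simp add: power2_eq_square algebra_simps)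
  qed
  show "c > 0" unfolding c_def using den num by simp
  have sq1: "\<alpha>^2 > 10.24" using power_strict_mono[of "3.2" \<alpha> 2] assms by (simp add: power2_eq_square)
  have sq2: "\<alpha>^2 < 10.3041" using power_strict_mono[of \<alpha> "3.21" 2] assms by (simp add: power2_eq_square)
  have lo: "0.1808 * (11 * \<alpha>^2 - 23 * \<alpha> + 20) < 2 * \<alpha>^2 - 4 * \<alpha> + 3"
    using sq1 assms by simp
  have hi: "2 * \<alpha>^2 - 4 * \<alpha> + 3 < 0.1810 * (11 * \<alpha>^2 - 23 * \<alpha> + 20)"
    using sq2 assms by simp
  have "0.1808 < c" unfolding c_def using lo den by (simp add: pos_less_divide_eq)
  moreover have "c < 0.1810" unfolding c_def using hi den by (simp add: pos_divide_less_eq)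
  ultimately show "\<bar>c - 0.1809\<bar> < 0.0001" unfolding abs_less_iff by linarith
qed

lemma asym:
  fixes \<alpha> :: real and a :: "nat \<Rightarrow> real"
  assumes P: "\<alpha> ^ 3 - 5 * \<alpha> ^ 2 + 7 * \<alpha> - 4 = 0"
  and rec: "\<And>k. k \<ge> 2 \<Longrightarrow> a (k + 3) = 5 * a (k + 2) - 7 * a (k + 1) + 4 * a k"
  and a2: "a 2 = 2" and a3: "a 3 = 6" and a4: "a 4 = 19"
  shows "(\<lambda>n. a n / \<alpha> ^ n) \<longlonglongrightarrow> (2 * \<alpha>^2 - 4 * \<alpha> + 3) / (11 * \<alpha>^2 - 23 * \<alpha> + 20)"
proof -
  have al: "3.2 < \<alpha>" "\<alpha> < 3.21" using alpha_facts[OF P] by auto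
  have apos: "\<alpha> > 0" using al by simp
  define p where "p = 5 - \<alpha>"
  define q where "q = \<alpha>^2 - 5 * \<alpha> + 7"
  define D where "D = 3 * \<alpha>^2 - 10 * \<alpha> + 7"
  define E where "E = 11 * \<alpha>^2 - 23 * \<alpha> + 20"
  define L2 where "L2 = 2 * \<alpha>^2 - 4 * \<alpha> + 3"
  define c where "c = L2 / E"
  have aq: "\<alpha> * q = 4" using P unfolding q_def by (simp add: power2_eq_square power3_eq_cube algebra_simps)
  have ED: "E = \<alpha>^2 * D"
  proof -
    have c3: "\<alpha>^3 = 5 * \<alpha>^2 - 7 * \<alpha> + 4" using P by simp
    have c4: "\<alpha>^4 = 18 * \<alpha>^2 - 31 * \<alpha> + 20"
    proof -
      have "\<alpha>^4 = \<alpha> * \<alpha>^3" by (simp add: power_Suc[symmetric] del: power_Suc)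
      also have "\<dots> = \<alpha> * (5 * \<alpha>^2 - 7 * \<alpha> + 4)" by (simp only: c3)
      also have "\<dots> = 5 * \<alpha>^3 - 7 * \<alpha>^2 + 4 * \<alpha>" by (simp add: power2_eq_square power3_eq_cube algebra_simps)
      finally show ?thesis unfolding c3 by (simp add: algebra_simps)
    qed
    have "\<alpha>^2 * D = 3 * \<alpha>^4 - 10 * \<alpha>^3 + 7 * \<alpha>^2"
      unfolding D_def by (simp add: algebra_simps power2_eq_square power3_eq_cube power4_eq_xxxx)
    then show ?thesis unfolding E_def c4 c3 by simp
  qed
  have Epos: "E > 0"
  proof -
    have "\<alpha> * (11 * \<alpha> - 23) > 0" using al by (intro mult_pos_pos) auto
    then show ?thesis unfolding E_def by (simp add: power2_eq_square algebra_simps)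
  qed
  have DpqD: "\<alpha>^2 - p * \<alpha> + q = D" unfolding p_def q_def D_def by (simp add: algebra_simps power2_eq_square)
  define L where "L n = a (n + 2) - p * a (n + 1) + q * a n" for n
  have Lstep: "L (k + 3) = \<alpha> * L (k + 2)" for k
  proof -
    have r: "a (k + 5) = 5 * a (k + 4) - 7 * a (k + 3) + 4 * a (k + 2)"
    proof -
      have e1: "k + 2 + 3 = k + 5" "k + 2 + 2 = k + 4" "k + 2 + 1 = k + 3" by simp_all
      have "k + 2 \<ge> 2" by simp
      from rec[OF this] show ?thesis unfolding e1 .
    qed
    have "L (k + 3) = a (k + 5) - p * a (k + 4) + q * a (k + 3)" by (simp add: L_def add.commute)
    also have "\<dots> = (5 - p) * a (k + 4) + (q - 7) * a (k + 3) + 4 * a (k + 2)" unfolding r by (simp add: algebra_simps)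
    also have "\<dots> = \<alpha> * a (k + 4) - \<alpha> * p * a (k + 3) + \<alpha> * q * a (k + 2)"
    proof -
      have h1: "5 - p = \<alpha>" by (simp add: p_def)
      have h2: "q - 7 = - (\<alpha> * p)" by (simp add: p_def q_def algebra_simps power2_eq_square)
      show ?thesis by (simp only: h1 h2 aq) (simp add: algebra_simps)
    qed
    also have "\<dots> = \<alpha> * L (k + 2)" by (simp add: L_def algebra_simps numeral_eq_Suc)
    finally show ?thesis .
  qed
  have L2v: "L 2 = L2"
  proof -
    have i: "(2::nat) + 2 = 4" "(2::nat) + 1 = 3" by simp_all
    show ?thesis unfolding L_def i a2 a3 a4 L2_def p_def q_def by (simp add: algebra_simps power2_eq_square)
  qed
  have Lk: "L (k + 2) = L2 * \<alpha> ^ k" for k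
  proof (induction k)
    case 0 then show ?case using L2v by (simp add: numeral_2_eq_2)
  next
    case (Suc k)
    have "L (Suc k + 2) = L (k + 3)" by (simp add: numeral_eq_Suc)
    also have "\<dots> = \<alpha> * L (k + 2)" by (rule Lstep)
    finally show ?case using Suc by simp
  qed
  define e where "e n = a n - c * \<alpha> ^ n" for n
  have erec: "e (k + 4) = p * e (k + 3) - q * e (k + 2)" for k
  proof -
    have "c * \<alpha> ^ (k + 2) * D = L2 * \<alpha> ^ k"
    proof -
      have "D \<noteq> 0" using Epos ED by auto
      then show ?thesis unfolding c_def ED using apos by (simp add: power_add power2_eq_square field_simps)
    qed
    then have "c * \<alpha> ^ (k + 2) * (\<alpha>^2 - p * \<alpha> + q) = L (k + 2)" using DpqD Lk by simp
    then show ?thesis unfolding e_def L_def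
      by (simp add: algebra_simps power2_eq_square power_add numeral_eq_Suc)
  qed
  define N where "N k = (e (k + 3))^2 - p * e (k + 3) * e (k + 2) + q * (e (k + 2))^2" for k
  have Nstep: "N (Suc k) = q * N k" for k
  proof -
    have "N (Suc k) = (e (k + 4))^2 - p * e (k + 4) * e (k + 3) + q * (e (k + 3))^2"
      by (simp add: N_def numeral_eq_Suc)
    then show ?thesis unfolding erec N_def by (simp add: algebra_simps power2_eq_square)
  qed
  have Nk: "N k = N 0 * q ^ k" for k by (induction k) (simp_all add: Nstep)
  define \<delta> where "\<delta> = q - p^2 / 4"
  have dpos: "\<delta> > 0"
  proof -
    have "(3 * \<alpha> - 1) * (\<alpha> - 3) > 0" using al by (intro mult_pos_pos) auto
    moreover have "4 * q - p^2 = (3 * \<alpha> - 1) * (\<alpha> - 3)"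
      unfolding p_def q_def by (simp add: algebra_simps power2_eq_square)
    moreover have "\<delta> = (4 * q - p^2) / 4" unfolding \<delta>_def by simp
    ultimately show ?thesis by simp
  qed
  have qpos: "q > 0" using aq apos by (metis mult_pos_pos zero_less_mult_pos zero_less_numeral)
  define \<rho> where "\<rho> = q / \<alpha>^2"
  have rho: "0 < \<rho>" "\<rho> < 1"
  proof -
    show "0 < \<rho>" unfolding \<rho>_def using qpos apos by simp
    have "\<alpha>^3 > 4" using al power_strict_mono[of 3 \<alpha> 3] by simp
    then have "\<alpha> * \<alpha>^2 > \<alpha> * q" using aq by (simp add: power3_eq_cube power2_eq_square)
    then have "q < \<alpha>^2" using apos by simp
    then show "\<rho> < 1" unfolding \<rho>_def using apos by simp
  qed
  define f where "f n = e n / \<alpha> ^ n" for n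
  define K where "K = N 0 / (\<delta> * \<alpha>^4)"
  have fbound: "(f (k + 2))^2 \<le> K * \<rho> ^ k" for k
  proof -
    have "\<delta> * (e (k + 2))^2 \<le> N k"
    proof -
      have "N k - \<delta> * (e (k + 2))^2 = (e (k + 3) - p * e (k + 2) / 2)^2"
        unfolding N_def \<delta>_def by (simp add: algebra_simps power2_eq_square)
      then show ?thesis by (metis diff_ge_0_iff_ge zero_le_power2)
    qed
    then have "(e (k + 2))^2 \<le> N k / \<delta>" using dpos by (simp add: pos_le_divide_eq mult.commute)
    then have "(e (k + 2))^2 \<le> N 0 * q ^ k / \<delta>" using Nk[of k] by simp
    then have "(e (k + 2))^2 / (\<alpha>^(k+2))^2 \<le> N 0 * q ^ k / \<delta> / (\<alpha>^(k+2))^2"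
      using apos by (intro divide_right_mono) auto
    also have "\<dots> = K * \<rho> ^ k"
    proof -
      have X: "(\<alpha>^(k+2))^2 = \<alpha>^4 * (\<alpha>^2)^k"
      proof -
        have "(\<alpha>^(k+2))^2 = \<alpha>^((k+2)*2)" by (simp only: power_mult)
        also have "(k+2)*2 = k*2 + 4" by simp
        also have "\<alpha>^(k*2 + 4) = \<alpha>^4 * (\<alpha>^2)^k" by (simp add: power_add) (metis power_mult mult.commute)
        finally show ?thesis .
      qed
      have a4: "\<alpha>^4 > 0" "(\<alpha>^2)^k > 0" using apos by simp_all
      show ?thesis unfolding X K_def \<rho>_def power_divide using a4 dpos by (simp add: divide_simps)
    qed
    finally show ?thesis unfolding f_def by (simp add: power_divide)
  qed
  have Kr: "(\<lambda>k. K * \<rho> ^ k) \<longlonglongrightarrow> 0"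
    using rho by (intro tendsto_mult_right_zero LIMSEQ_power_zero) auto
  have "(\<lambda>k. (f (k + 2))^2) \<longlonglongrightarrow> 0"
  proof (rule tendsto_sandwich[of "\<lambda>_. 0" _ sequentially "\<lambda>k. K * \<rho> ^ k"])
    show "\<forall>\<^sub>F k in sequentially. 0 \<le> (f (k + 2))^2" by simp
    show "\<forall>\<^sub>F k in sequentially. (f (k + 2))^2 \<le> K * \<rho> ^ k" using fbound by (intro always_eventually) auto
  qed (use Kr in auto)
  then have "(\<lambda>k. sqrt ((f (k + 2))^2)) \<longlonglongrightarrow> sqrt 0" by (rule tendsto_real_sqrt)
  then have "(\<lambda>k. \<bar>f (k + 2)\<bar>) \<longlonglongrightarrow> 0" by simp
  then have "(\<lambda>k. f (k + 2)) \<longlonglongrightarrow> 0" by (simp add: tendsto_rabs_zero_iff)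
  then have f0: "f \<longlonglongrightarrow> 0" by (rule LIMSEQ_offset)
  have "(\<lambda>n. c + f n) \<longlonglongrightarrow> c + 0" by (intro tendsto_add tendsto_const f0)
  moreover have "a n / \<alpha> ^ n = c + f n" for n
    unfolding f_def e_def using apos by (simp add: field_simps)
  ultimately show ?thesis unfolding c_def L2_def E_def by simp
qed


lemma Gset_zero: "n \<ge> 1 \<Longrightarrow> Gset n 0 = {}"
proof -
  assume n: "n \<ge> 1"
  have "M \<notin> Gset n 0" for M
  proof
    assume M: "M \<in> Gset n 0"
    then have "size M = n" "count M (Max (set_mset M)) = 0" by (auto simp: Gset_def)
    moreover have "M \<noteq> {#}" using n \<open>size M = n\<close> by auto
    ultimately show False using count_max_range[of M] by simp
  qed
  then show ?thesis by auto
qed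

lemma Gset_finite: "finite (Gset n m)"
proof (induction n arbitrary: m rule: less_induct)
  case (less n)
  show ?case
  proof (cases "n = 0")
    case True
    then have "Gset n m \<subseteq> {{#}}" by (auto simp: Gset_def)
    then show ?thesis using finite_subset by blast
  next
    case False
    then have n1: "n \<ge> 1" by simp
    consider "m = 0" | "m > n" | "m = n" | "1 \<le> m \<and> m < n" by linarith
    then show ?thesis
    proof cases
      case 1 then show ?thesis using Gset_zero[OF n1] by simp
    next
      case 2 then show ?thesis using Gset_big by simp
    next
      case 3 then show ?thesis using Gset_nn[OF n1] by simp
    next
      case 4
      then have "\<And>k. finite (Gset (n - m) k)" using less.IH[of "n - m"] by simp
      then show ?thesis using Gset_rec 4 by blast
    qed
  qed
qed

lemma gcount_Gset: "gcount (\<lambda>n m. card (Gset n m))"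
proof
  fix n :: nat assume "n \<ge> 1"
  then show "card (Gset n n) = 1" by (simp add: Gset_nn)
next
  fix m n :: nat assume "1 \<le> m" "m < n"
  then show "card (Gset n m) = (\<Sum>k = 1..n - m. (m + k - 1) * card (Gset (n - m) k))"
    using Gset_rec[of m n] Gset_finite by blast
qed

lemma a_seq_Aq:
  assumes "n \<ge> 1"
  shows "int (a_seq n) = Aq (\<lambda>n m. card (Gset n m)) n"
proof -
  have "Nset n = Nn n" unfolding Nset_def Nn_def using period_iff_good by auto
  then have "a_seq n = card (\<Union>m\<in>{1..n}. Gset n m)"
    using a_seq_Nset[OF assms] Nn_Union[OF assms] by simp
  also have "\<dots> = (\<Sum>m=1..n. card (Gset n m))"
    by (rule card_UN_disjoint) (auto simp: Gset_finite Gset_disj)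
  finally show ?thesis by (simp add: Aq_def)
qed

theorem corollary4p4:
  fixes \<alpha> :: real
  assumes "\<alpha> ^ 3 - 5 * \<alpha> ^ 2 + 7 * \<alpha> - 4 = 0"
  shows "\<exists>c::real. c > 0 \<and> \<bar>c - 0.1809\<bar> < 0.0001 \<and>
           (\<lambda>n. real (a_seq n) / \<alpha> ^ n) \<longlonglongrightarrow> c"
proof -
  define G where "G = (\<lambda>n m. card (Gset n m))"
  interpret gc: gcount G unfolding G_def by (rule gcount_Gset)
  define b where "b n = real_of_int (Aq G n)" for n
  define c where "c = (2 * \<alpha>^2 - 4 * \<alpha> + 3) / (11 * \<alpha>^2 - 23 * \<alpha> + 20)"
  have al: "3.2 < \<alpha>" "\<alpha> < 3.21" using alpha_facts[OF assms] by auto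
  have blim: "(\<lambda>n. b n / \<alpha> ^ n) \<longlonglongrightarrow> c"
    unfolding c_def
  proof (rule asym[OF assms])
    fix k :: nat assume "k \<ge> 2"
    then show "b (k + 3) = 5 * b (k + 2) - 7 * b (k + 1) + 4 * b k"
      using gc.A_rec2[of k] unfolding b_def by simp
  qed (simp_all add: b_def gc.A_vals)
  then have "(\<lambda>n. b (n + 1) / \<alpha> ^ (n + 1)) \<longlonglongrightarrow> c"
    by (rule LIMSEQ_ignore_initial_segment)
  moreover have "b (n + 1) = real (a_seq (n + 1))" for n
    using a_seq_Aq[of "n + 1"] unfolding b_def G_def by (metis of_int_of_nat_eq le_add2)
  ultimately have "(\<lambda>n. real (a_seq (n + 1)) / \<alpha> ^ (n + 1)) \<longlonglongrightarrow> c" by simp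
  then have "(\<lambda>n. real (a_seq n) / \<alpha> ^ n) \<longlonglongrightarrow> c" by (rule LIMSEQ_offset)
  moreover have "c > 0" "\<bar>c - 0.1809\<bar> < 0.0001" using c_bounds[OF al] unfolding c_def by auto
  ultimately show ?thesis by blast
qed

end
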